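(* The energy matrix $\sigma$ is symmetric and positive-definite.
   Context: Fix integers $d,p\ge 1$. Let $(Z_n)=(A_n,M_n)$ be a Markov-additive process on $\mathbb{Z}^d\times\{1,\dots,p\}$ (a Markov chain with $\mathbb{P}_{(x,i)}((A_1,M_1)=(x',i'))=\mathbb{P}_{(0,i)}((A_1,M_1)=(x'-x,i'))$), with jump matrix $\mu_{i,j}(x)=\mathbb{P}_{(0,i)}((A_1,M_1)=(x,j))$, assumed irreducible, aperiodic (for every state $(x,i)$, $\gcd\{n\ge1:\mathbb{P}_{(x,i)}(Z_n=(x,i))>0\}=1$), with finite exponential moments ($\sum_xe^{\alpha\|x\|}\mu_{i,j}(x)<\infty$ for all $\alpha>0$). Let $\pi$ be the stationary distribution of the transition matrix $\big(\sum_x\mu_{i,j}(x)\big)_{i,j}$ of $(M_n)$; local drifts $m_{i,j}=\sum_x x\mu_{i,j}(x)$, global drift $m=\sum_{i,j}\pi_im_{i,j}$. A change of section is a real $p\times d$ matrix $g$ with rows $g_i$; the $g$-changed process has jump measures ${}^g\mu_{i,j}(x)=\mu_{i,j}(x+g_j-g_i)$ ($x\in\mathbb{R}^d$) and local drifts ${}^gm_{i,j}=\sum_xx\,{}^g\mu_{i,j}(x)$. A change of section is appropriate if $\sum_j{}^gm_{i,j}=m$ for all $i$; such $g$ exist and the resulting measures ${}^g\mu_{i,j}$ do not depend on the appropriate $g$. The energy matrix is the $d\times d$ matrix $\sigma_{k,l}=\sum_{x\in\mathbb{R}^d}x_kx_l\sum_{i,j=1}^p\pi_i\,{}^g\mu_{i,j}(x)$,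 $g$ appropriate. *)

theory Defs
  imports "HOL-Analysis.Analysis"
begin

text \<open>The dimension d is the cardinality of a finite index type 'd,
  the set of internal states {1..p} is a finite type 'p.
  Points of Z^d are int^'d, points of R^d are real^'d.
  The jump matrix is mu :: 'p => 'p => int^'d => real,
  mu i j x = P_(0,i)((A_1,M_1) = (x,j)).\<close>

definition rvec :: "int^'d \<Rightarrow> real^'d" where
  "rvec x = (\<chi> k. real_of_int (x $ k))"

definition mak_kernel :: "('p \<Rightarrow> 'p \<Rightarrow> int^'d \<Rightarrow> real) \<Rightarrow> ((int^'d) \<times> 'p) \<Rightarrow> ((int^'d) \<times> 'p) \<Rightarrow> real" where
  "mak_kernel mu s t = mu (snd s) (snd t) (fst t - fst s)"

fun mak_nstep :: "('p \<Rightarrow> 'p \<Rightarrow> int^'d \<Rightarrow> real) \<Rightarrow> nat \<Rightarrow> ((int^'d) \<times> 'p) \<Rightarrow> ((int^'d) \<times> 'p) \<Rightarrow> real" where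
  "mak_nstep mu 0 s t = (if s = t then 1 else 0)"
| "mak_nstep mu (Suc n) s t = infsum (\<lambda>u. mak_nstep mu n s u * mak_kernel mu u t) UNIV"

definition is_jump_matrix :: "('p \<Rightarrow> 'p \<Rightarrow> int^'d \<Rightarrow> real) \<Rightarrow> bool" where
  "is_jump_matrix mu \<longleftrightarrow> (\<forall>i j x. 0 \<le> mu i j x) \<and>
     (\<forall>i. ((\<lambda>(j, x). mu i j x) has_sum 1) UNIV)"

definition mak_irreducible :: "('p \<Rightarrow> 'p \<Rightarrow> int^'d \<Rightarrow> real) \<Rightarrow> bool" where
  "mak_irreducible mu \<longleftrightarrow> (\<forall>s t. \<exists>n. mak_nstep mu n s t > 0)"

definition mak_aperiodic :: "('p \<Rightarrow> 'p \<Rightarrow> int^'d \<Rightarrow> real) \<Rightarrow> bool" where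
  "mak_aperiodic mu \<longleftrightarrow> (\<forall>s. Gcd {n. n \<ge> 1 \<and> mak_nstep mu n s s > 0} = 1)"

definition finite_exp_moments :: "('p \<Rightarrow> 'p \<Rightarrow> int^'d \<Rightarrow> real) \<Rightarrow> bool" where
  "finite_exp_moments mu \<longleftrightarrow>
     (\<forall>\<alpha>>0. \<forall>i j. (\<lambda>x. exp (\<alpha> * norm (rvec x)) * mu i j x) summable_on UNIV)"

definition internal_matrix :: "('p \<Rightarrow> 'p \<Rightarrow> int^'d \<Rightarrow> real) \<Rightarrow> 'p \<Rightarrow> 'p \<Rightarrow> real" where
  "internal_matrix mu i j = infsum (mu i j) UNIV"

definition is_stationary :: "('p \<Rightarrow> 'p \<Rightarrow> int^'d \<Rightarrow> real) \<Rightarrow> ('p::finite \<Rightarrow> real) \<Rightarrow> bool" where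
  "is_stationary mu \<pi> \<longleftrightarrow> (\<forall>i. 0 \<le> \<pi> i) \<and> (\<Sum>i\<in>UNIV. \<pi> i) = 1 \<and>
     (\<forall>j. (\<Sum>i\<in>UNIV. \<pi> i * internal_matrix mu i j) = \<pi> j)"

definition local_drift :: "('p \<Rightarrow> 'p \<Rightarrow> int^'d \<Rightarrow> real) \<Rightarrow> 'p \<Rightarrow> 'p \<Rightarrow> real^'d" where
  "local_drift mu i j = infsum (\<lambda>x. mu i j x *\<^sub>R rvec x) UNIV"

definition global_drift :: "('p \<Rightarrow> 'p \<Rightarrow> int^'d \<Rightarrow> real) \<Rightarrow> ('p::finite \<Rightarrow> real) \<Rightarrow> real^'d" where
  "global_drift mu \<pi> = (\<Sum>i\<in>UNIV. \<Sum>j\<in>UNIV. \<pi> i *\<^sub>R local_drift mu i j)"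

definition mu_ext :: "('p \<Rightarrow> 'p \<Rightarrow> int^'d \<Rightarrow> real) \<Rightarrow> 'p \<Rightarrow> 'p \<Rightarrow> real^'d \<Rightarrow> real" where
  "mu_ext mu i j y = (if y \<in> range rvec then mu i j (inv rvec y) else 0)"

definition changed_mu :: "('p \<Rightarrow> 'p \<Rightarrow> int^'d \<Rightarrow> real) \<Rightarrow> ('p \<Rightarrow> real^'d) \<Rightarrow> 'p \<Rightarrow> 'p \<Rightarrow> real^'d \<Rightarrow> real" where
  "changed_mu mu g i j x = mu_ext mu i j (x + g j - g i)"

definition changed_drift :: "('p \<Rightarrow> 'p \<Rightarrow> int^'d \<Rightarrow> real) \<Rightarrow> ('p \<Rightarrow> real^'d) \<Rightarrow> 'p \<Rightarrow> 'p \<Rightarrow> real^'d" where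
  "changed_drift mu g i j = infsum (\<lambda>x. changed_mu mu g i j x *\<^sub>R x) UNIV"

definition appropriate_section :: "('p \<Rightarrow> 'p \<Rightarrow> int^'d \<Rightarrow> real) \<Rightarrow> ('p::finite \<Rightarrow> real) \<Rightarrow> ('p \<Rightarrow> real^'d) \<Rightarrow> bool" where
  "appropriate_section mu \<pi> g \<longleftrightarrow> (\<forall>i. (\<Sum>j\<in>UNIV. changed_drift mu g i j) = global_drift mu \<pi>)"

definition energy_matrix :: "('p \<Rightarrow> 'p \<Rightarrow> int^'d \<Rightarrow> real) \<Rightarrow> ('p::finite \<Rightarrow> real) \<Rightarrow> ('p \<Rightarrow> real^'d) \<Rightarrow> real^'d^'d" where
  "energy_matrix mu \<pi> g = (\<chi> k l. infsum (\<lambda>x::real^'d. x $ k * x $ l *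
      (\<Sum>i\<in>UNIV. \<Sum>j\<in>UNIV. \<pi> i * changed_mu mu g i j x)) UNIV)"

definition pos_definite :: "real^'d^'d \<Rightarrow> bool" where
  "pos_definite A \<longleftrightarrow> (\<forall>v. v \<noteq> 0 \<longrightarrow> v \<bullet> (A *v v) > 0)"

end

theory Submission
  imports Defs
begin

lemma nstep_nonneg:
  assumes "is_jump_matrix mu"
  shows "0 \<le> mak_nstep mu n s t"
proof (induction n arbitrary: t)
  case 0 then show ?case by simp
next
  case (Suc n)
  have "\<And>u. 0 \<le> mak_kernel mu u t" using assms by (simp add: is_jump_matrix_def mak_kernel_def)
  then show ?case using Suc by (simp add: infsum_nonneg)
qed

lemma nstep_invariant:
  assumes jm: "is_jump_matrix mu" and Qs: "Q s"
    and step: "\<And>u t. Q u \<Longrightarrow> mak_kernel mu u t > 0 \<Longrightarrow> Q t"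
  shows "mak_nstep mu n s t > 0 \<Longrightarrow> Q t"
proof (induction n arbitrary: t)
  case 0 then show ?case using Qs by (simp split: if_splits)
next
  case (Suc n)
  have "\<exists>u. mak_nstep mu n s u * mak_kernel mu u t \<noteq> 0"
  proof (rule ccontr)
    assume "\<not> ?thesis"
    then have "infsum (\<lambda>u. mak_nstep mu n s u * mak_kernel mu u t) UNIV = 0"
      by (intro infsum_0) auto
    then show False using Suc.prems by simp
  qed
  then obtain u where u: "mak_nstep mu n s u * mak_kernel mu u t \<noteq> 0" by blast
  have k0: "0 \<le> mak_kernel mu u t" using jm by (simp add: is_jump_matrix_def mak_kernel_def)
  have n0: "0 \<le> mak_nstep mu n s u" using nstep_nonneg[OF jm] .
  have "mak_nstep mu n s u > 0" "mak_kernel mu u t > 0" using u k0 n0 by (auto simp: less_le)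
  then show ?case using Suc.IH step by blast
qed

lemma rvec_0[simp]: "rvec 0 = 0" by (simp add: rvec_def vec_eq_iff)
lemma rvec_diff: "rvec (a - b) = rvec a - rvec b" by (simp add: rvec_def vec_eq_iff)
lemma rvec_inj: "inj rvec" by (auto simp: inj_def rvec_def vec_eq_iff)
lemma rvec_axis: "rvec (axis k 1) = axis k 1" by (simp add: rvec_def vec_eq_iff axis_def)

lemma mu_ext_rvec[simp]: "mu_ext mu i j (rvec y) = mu i j y"
  by (simp add: mu_ext_def inv_f_f[OF rvec_inj])

lemma mu_summable:
  fixes mu :: "'p \<Rightarrow> 'p \<Rightarrow> int^'d \<Rightarrow> real"
  assumes "is_jump_matrix mu" "finite_exp_moments mu"
  shows "mu i j summable_on UNIV"
proof -
  have s: "(\<lambda>x. exp (1 * norm (rvec x)) * mu i j x) summable_on UNIV"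
    using assms(2) unfolding finite_exp_moments_def by (meson zero_less_one)
  show ?thesis
  proof (rule summable_on_comparison_test[OF s])
    fix x :: "int^'d"
    have "1 \<le> exp (1 * norm (rvec x))" by simp
    moreover have "0 \<le> mu i j x" using assms(1) by (simp add: is_jump_matrix_def)
    ultimately show "mu i j x \<le> exp (1 * norm (rvec x)) * mu i j x"
      by (metis mult_le_cancel_right1 linorder_not_le order_less_le_trans order.refl mult_left_mono mult_1)
    show "0 \<le> mu i j x" using assms(1) by (simp add: is_jump_matrix_def)
  qed
qed


lemma internal_pos:
  fixes mu :: "'p::finite \<Rightarrow> 'p \<Rightarrow> int^'d \<Rightarrow> real"
  assumes jm: "is_jump_matrix mu" and fm: "finite_exp_moments mu"
    and st: "is_stationary mu \<pi>" and pi: "\<pi> i > 0" and m: "mu i j y > 0"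
  shows "\<pi> j > 0"
proof -
  have P0: "\<And>a b. 0 \<le> internal_matrix mu a b"
    using jm by (simp add: internal_matrix_def is_jump_matrix_def infsum_nonneg)
  have "mu i j y \<le> internal_matrix mu i j"
  proof -
    have "sum (mu i j) {y} \<le> infsum (mu i j) UNIV"
      by (rule finite_sum_le_infsum) (use mu_summable[OF jm fm] jm in \<open>auto simp: is_jump_matrix_def\<close>)
    then show ?thesis by (simp add: internal_matrix_def)
  qed
  then have "internal_matrix mu i j > 0" using m by simp
  then have "\<pi> i * internal_matrix mu i j > 0" using pi by simp
  also have "\<pi> i * internal_matrix mu i j \<le> (\<Sum>a\<in>UNIV. \<pi> a * internal_matrix mu a j)"
    by (rule member_le_sum) (use st P0 in \<open>auto simp: is_stationary_def\<close>)
  also have "\<dots> = \<pi> j" using st by (simp add: is_stationary_def)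
  finally show ?thesis .
qed

lemma witness:
  fixes mu :: "'p::finite \<Rightarrow> 'p \<Rightarrow> int^'d \<Rightarrow> real" and v :: "real^'d"
  assumes jm: "is_jump_matrix mu" and fm: "finite_exp_moments mu"
    and irr: "mak_irreducible mu"
    and st: "is_stationary mu \<pi>" and v: "v \<noteq> 0"
  shows "\<exists>i j y. \<pi> i > 0 \<and> mu i j y > 0 \<and> v \<bullet> (rvec y - (g j - g i)) \<noteq> 0"
proof (rule ccontr)
  assume "\<not> ?thesis"
  then have H: "\<And>i j y. \<pi> i > 0 \<Longrightarrow> mu i j y > 0 \<Longrightarrow> v \<bullet> rvec y = v \<bullet> (g j - g i)"
    by (auto simp: inner_diff_right)
  obtain i0 where i0: "\<pi> i0 > 0"
  proof -
    have "\<exists>i. \<pi> i > 0"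
    proof (rule ccontr)
      assume "\<not> ?thesis"
      then have "\<And>i. \<pi> i = 0" using st by (metis is_stationary_def linorder_not_le order_antisym)
      then show False using st by (simp add: is_stationary_def)
    qed
    then show ?thesis using that by blast
  qed
  define Q where "Q = (\<lambda>(z::int^'d, j). \<pi> j > 0 \<and> v \<bullet> rvec z = v \<bullet> (g j - g i0))"
  have Q0: "Q (0, i0)" using i0 by (simp add: Q_def)
  have step: "Q t" if "Q u" "mak_kernel mu u t > 0" for u t
  proof -
    obtain z j where u: "u = (z, j)" by (cases u)
    obtain z' j' where t: "t = (z', j')" by (cases t)
    have pj: "\<pi> j > 0" and vz: "v \<bullet> rvec z = v \<bullet> (g j - g i0)" using that(1) by (auto simp: Q_def u)
    have m: "mu j j' (z' - z) > 0" using that(2) by (simp add: mak_kernel_def u t)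
    have "\<pi> j' > 0" by (rule internal_pos[OF jm fm st pj m])
    moreover have "v \<bullet> rvec (z' - z) = v \<bullet> (g j' - g j)" by (rule H[OF pj m])
    then have "v \<bullet> rvec z' = v \<bullet> (g j' - g i0)" using vz
      by (simp add: rvec_diff inner_diff_right)
    ultimately show ?thesis by (simp add: Q_def t)
  qed
  have "v $ k = 0" for k
  proof -
    obtain n where "mak_nstep mu n (0, i0) (axis k 1, i0) > 0" using irr by (meson mak_irreducible_def)
    then have "Q (axis k 1, i0)" using nstep_invariant[of mu Q "(0,i0)" n "(axis k 1, i0)"] jm Q0 step by blast
    then show ?thesis by (simp add: Q_def rvec_axis inner_axis)
  qed
  then have "v = 0" by (simp add: vec_eq_iff)
  then show False using v by simp
qed


lemma sq_le_exp: "0 \<le> (t::real) \<Longrightarrow> t^2 \<le> exp (2 * t)"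
proof -
  assume t: "0 \<le> t"
  have "t \<le> exp t" using exp_ge_add_one_self[of t] by linarith
  then have "t^2 \<le> (exp t)^2" using t by (intro power_mono) auto
  also have "\<dots> = exp (2 * t)" by (simp add: power2_eq_square exp_add[symmetric])
  finally show ?thesis .
qed

lemma quad_summable:
  fixes mu :: "'p::finite \<Rightarrow> 'p \<Rightarrow> int^'d \<Rightarrow> real" and q :: "real^'d \<Rightarrow> real"
  assumes jm: "is_jump_matrix mu" and fm: "finite_exp_moments mu"
    and B: "0 \<le> B" and qb: "\<And>x. \<bar>q x\<bar> \<le> B * (norm x)^2"
  shows "(\<lambda>x. q x * changed_mu mu g i j x) summable_on UNIV"
proof -
  define c where "c = g j - g i"
  define \<phi> where "\<phi> = (\<lambda>y. rvec y - c)"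
  define h where "h = (\<lambda>x. q x * changed_mu mu g i j x)"
  have inj: "inj \<phi>" using rvec_inj by (auto simp: inj_def \<phi>_def)
  have hphi: "(h \<circ> \<phi>) y = q (\<phi> y) * mu i j y" for y
    by (simp add: h_def \<phi>_def changed_mu_def c_def)
  have es: "(\<lambda>y. exp (2 * norm (rvec y)) * mu i j y) summable_on UNIV"
    using fm unfolding finite_exp_moments_def by (meson zero_less_numeral)
  have es2: "(\<lambda>y. (B * exp (2 * norm c)) * (exp (2 * norm (rvec y)) * mu i j y)) summable_on UNIV"
    by (rule summable_on_cmult_right[OF es])
  have "(\<lambda>y. norm (q (\<phi> y) * mu i j y)) summable_on UNIV"
  proof (rule Infinite_Sum.abs_summable_on_comparison_test'[OF es2])
    fix y :: "int^'d"
    have m0: "0 \<le> mu i j y" using jm by (simp add: is_jump_matrix_def)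
    have n1: "norm (\<phi> y) \<le> norm (rvec y) + norm c" unfolding \<phi>_def by (rule norm_triangle_ineq4)
    have "(norm (\<phi> y))^2 \<le> (norm (rvec y) + norm c)^2"
      using n1 by (intro power_mono) auto
    also have "\<dots> \<le> exp (2 * (norm (rvec y) + norm c))" by (rule sq_le_exp) auto
    also have "\<dots> = exp (2 * norm c) * exp (2 * norm (rvec y))"
      by (simp add: exp_add[symmetric] algebra_simps)
    finally have e: "(norm (\<phi> y))^2 \<le> exp (2 * norm c) * exp (2 * norm (rvec y))" .
    have "\<bar>q (\<phi> y)\<bar> \<le> B * exp (2 * norm c) * exp (2 * norm (rvec y))"
      using qb[of "\<phi> y"] mult_left_mono[OF e B] by (simp add: mult.assoc)
    then have "\<bar>q (\<phi> y)\<bar> * mu i j y \<le> B * exp (2 * norm c) * exp (2 * norm (rvec y)) * mu i j y"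
      using m0 by (rule mult_right_mono)
    then show "norm (q (\<phi> y) * mu i j y) \<le> (B * exp (2 * norm c)) * (exp (2 * norm (rvec y)) * mu i j y)"
      using m0 B by (simp add: abs_mult mult.assoc)
  qed
  then have "(\<lambda>y. q (\<phi> y) * mu i j y) summable_on UNIV"
    using summable_on_iff_abs_summable_on_real by blast
  then have "(h \<circ> \<phi>) summable_on UNIV"
    using hphi by (metis (no_types, lifting) ext)
  then have hr: "h summable_on range \<phi>" using summable_on_reindex[OF inj] by blast
  have "h summable_on UNIV"
  proof -
    have "h x = 0" if "x \<in> UNIV - range \<phi>" for x
    proof -
      have "x + g j - g i \<notin> range rvec"
      proof
        assume "x + g j - g i \<in> range rvec"
        then obtain y where "x + g j - g i = rvec y" by blast
        then have "x = \<phi> y" by (simp add: \<phi>_def c_def algebra_simps)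
        then show False using that by blast
      qed
      then show ?thesis by (simp add: h_def changed_mu_def mu_ext_def)
    qed
    then show ?thesis using summable_on_cong_neutral[of UNIV "range \<phi>" h h] hr by auto
  qed
  then show ?thesis by (simp add: h_def)
qed


lemma summable_on_finsum:
  fixes f :: "'i \<Rightarrow> 'a \<Rightarrow> real"
  assumes "finite I" "\<And>i. i \<in> I \<Longrightarrow> f i summable_on A"
  shows "(\<lambda>x. \<Sum>i\<in>I. f i x) summable_on A"
  using assms by (induction I rule: finite_induct) (auto intro: summable_on_add)

lemma infsum_finsum:
  fixes f :: "'i \<Rightarrow> 'a \<Rightarrow> real"
  assumes "finite I" "\<And>i. i \<in> I \<Longrightarrow> f i summable_on A"
  shows "infsum (\<lambda>x. \<Sum>i\<in>I. f i x) A = (\<Sum>i\<in>I. infsum (f i) A)"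
  using assms
proof (induction I rule: finite_induct)
  case empty then show ?case by simp
next
  case (insert a I)
  have "infsum (\<lambda>x. \<Sum>i\<in>insert a I. f i x) A = infsum (\<lambda>x. f a x + (\<Sum>i\<in>I. f i x)) A"
    using insert by simp
  also have "\<dots> = infsum (f a) A + infsum (\<lambda>x. \<Sum>i\<in>I. f i x) A"
    by (rule infsum_add) (use insert in \<open>auto intro!: summable_on_finsum\<close>)
  finally show ?case using insert by simp
qed

theorem proposition2p8:
  fixes mu :: "'p::finite \<Rightarrow> 'p \<Rightarrow> int^'d \<Rightarrow> real"
    and \<pi> :: "'p \<Rightarrow> real"
    and g :: "'p \<Rightarrow> real^'d"
  assumes "is_jump_matrix mu"
    and "mak_irreducible mu"
    and "mak_aperiodic mu"
    and "finite_exp_moments mu"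
    and "is_stationary mu \<pi>"
    and "appropriate_section mu \<pi> g"
  shows "transpose (energy_matrix mu \<pi> g) = energy_matrix mu \<pi> g
       \<and> pos_definite (energy_matrix mu \<pi> g)"
proof -
  note jm = assms(1) and irr = assms(2) and fm = assms(4) and st = assms(5)
  define w where "w = (\<lambda>x. \<Sum>i\<in>UNIV. \<Sum>j\<in>UNIV. \<pi> i * changed_mu mu g i j x)"
  define F where "F = (\<lambda>k l (x::real^'d). x $ k * x $ l * w x)"
  have E: "energy_matrix mu \<pi> g $ k $ l = infsum (F k l) UNIV" for k l
    by (simp add: energy_matrix_def F_def w_def)
  have cm0: "0 \<le> changed_mu mu g i j x" for i j x
    using jm by (simp add: changed_mu_def mu_ext_def is_jump_matrix_def)
  have w0: "0 \<le> w x" for x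
    unfolding w_def using st cm0 by (intro sum_nonneg) (auto simp: is_stationary_def)
  have Fs: "F k l summable_on UNIV" for k l
  proof -
    have eq: "F k l x = (\<Sum>i\<in>UNIV. \<Sum>j\<in>UNIV. (\<pi> i * (x $ k * x $ l)) * changed_mu mu g i j x)" for x
      by (simp add: F_def w_def sum_distrib_left algebra_simps)
    have "(\<lambda>x. \<Sum>i\<in>UNIV. \<Sum>j\<in>UNIV. (\<pi> i * (x $ k * x $ l)) * changed_mu mu g i j x) summable_on UNIV"
    proof (intro summable_on_finsum finite_UNIV)
      fix i j
      show "(\<lambda>x. (\<pi> i * (x $ k * x $ l)) * changed_mu mu g i j x) summable_on UNIV"
      proof (rule quad_summable[OF jm fm, of "\<bar>\<pi> i\<bar>"])
        fix x :: "real^'d"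
        have "\<bar>x $ k\<bar> \<le> norm x" "\<bar>x $ l\<bar> \<le> norm x" by (simp_all add: component_le_norm_cart)
        then have "\<bar>x $ k * x $ l\<bar> \<le> norm x * norm x"
          by (simp add: abs_mult mult_mono')
        then show "\<bar>\<pi> i * (x $ k * x $ l)\<bar> \<le> \<bar>\<pi> i\<bar> * (norm x)^2"
          by (simp add: abs_mult power2_eq_square mult_left_mono)
      qed simp
    qed simp_all
    then show ?thesis using eq by (metis (no_types, lifting) ext)
  qed
  have sym: "transpose (energy_matrix mu \<pi> g) = energy_matrix mu \<pi> g"
    by (simp add: transpose_def vec_eq_iff energy_matrix_def mult.commute mult.left_commute)
  have pd: "pos_definite (energy_matrix mu \<pi> g)"
    unfolding pos_definite_def
  proof (intro allI impI)
    fix v :: "real^'d"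
    assume v: "v \<noteq> 0"
    define G where "G = (\<lambda>x::real^'d. (v \<bullet> x)^2 * w x)"
    have Gsum: "G x = (\<Sum>k\<in>UNIV. \<Sum>l\<in>UNIV. v $ k * v $ l * F k l x)" for x
    proof -
      have "(v \<bullet> x)^2 = (\<Sum>k\<in>UNIV. \<Sum>l\<in>UNIV. (v $ k * x $ k) * (v $ l * x $ l))"
        by (simp add: inner_vec_def power2_eq_square sum_product)
      then show ?thesis
        by (simp add: G_def F_def sum_distrib_left sum_distrib_right algebra_simps)
    qed
    have Fs2: "(\<lambda>x. v $ k * v $ l * F k l x) summable_on UNIV" for k l
      by (rule summable_on_cmult_right[OF Fs])
    have Fs1: "(\<lambda>x. \<Sum>l\<in>UNIV. v $ k * v $ l * F k l x) summable_on UNIV" for k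
      by (rule summable_on_finsum) (simp_all add: Fs2)
    have "v \<bullet> (energy_matrix mu \<pi> g *v v) = (\<Sum>k\<in>UNIV. \<Sum>l\<in>UNIV. v $ k * v $ l * infsum (F k l) UNIV)"
      by (simp add: inner_vec_def matrix_vector_mult_def E sum_distrib_left algebra_simps)
    also have "\<dots> = (\<Sum>k\<in>UNIV. \<Sum>l\<in>UNIV. infsum (\<lambda>x. v $ k * v $ l * F k l x) UNIV)"
      by (simp add: infsum_cmult_right Fs)
    also have "\<dots> = (\<Sum>k\<in>UNIV. infsum (\<lambda>x. \<Sum>l\<in>UNIV. v $ k * v $ l * F k l x) UNIV)"
      by (simp add: infsum_finsum Fs2)
    also have "\<dots> = infsum (\<lambda>x. \<Sum>k\<in>UNIV. \<Sum>l\<in>UNIV. v $ k * v $ l * F k l x) UNIV"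
      by (simp add: infsum_finsum Fs1)
    also have "\<dots> = infsum G UNIV" by (rule arg_cong[where f="\<lambda>f. infsum f UNIV"]) (simp add: Gsum fun_eq_iff)
    finally have eqG: "v \<bullet> (energy_matrix mu \<pi> g *v v) = infsum G UNIV" .
    have Gs: "G summable_on UNIV"
    proof -
      have "(\<lambda>x. \<Sum>k\<in>UNIV. \<Sum>l\<in>UNIV. v $ k * v $ l * F k l x) summable_on UNIV"
        by (rule summable_on_finsum) (simp_all add: Fs1)
      then show ?thesis using Gsum by (metis (no_types, lifting) ext)
    qed
    obtain i j y where wit: "\<pi> i > 0" "mu i j y > 0" "v \<bullet> (rvec y - (g j - g i)) \<noteq> 0"
      using witness[OF jm fm irr st v] by blast
    define x0 where "x0 = rvec y - (g j - g i)"
    have cx0: "changed_mu mu g i j x0 = mu i j y"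
      by (simp add: changed_mu_def x0_def)
    have "\<pi> i * changed_mu mu g i j x0 \<le> (\<Sum>j'\<in>UNIV. \<pi> i * changed_mu mu g i j' x0)"
      by (rule member_le_sum) (use wit cm0 in auto)
    also have "\<dots> \<le> w x0"
      unfolding w_def
      by (rule member_le_sum[where f = "\<lambda>i'. \<Sum>j'\<in>UNIV. \<pi> i' * changed_mu mu g i' j' x0"])
         (use st cm0 in \<open>auto simp: is_stationary_def intro!: sum_nonneg\<close>)
    finally have "w x0 > 0" using wit cx0 by (smt (verit) mult_pos_pos)
    moreover have "(v \<bullet> x0)^2 > 0" using wit by (simp add: x0_def)
    ultimately have G0: "G x0 > 0" by (simp add: G_def)
    have "sum G {x0} \<le> infsum G UNIV"
      by (rule finite_sum_le_infsum[OF Gs]) (auto simp: G_def w0)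
    then show "v \<bullet> (energy_matrix mu \<pi> g *v v) > 0" using eqG G0 by simp
  qed
  show ?thesis using sym pd by blast
qed

end
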